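(* Every strong (i.e. strongly connected) tournament $T$ is $2^{*}$-weakly connected.
   Context: A tournament is a digraph in which each pair of distinct vertices is joined by exactly one arc; $x$ dominates $y$ if $xy$ is an arc. Paths are directed paths. For distinct vertices $u,v$ of a digraph $D$, a weak $k^{*}$-container between $u$ and $v$ is a set of $k$ internally disjoint paths, each of which is either a $(u,v)$-path or a $(v,u)$-path (different paths may have different directions), whose union contains every vertex of $D$. A strong $k^{*}$-container between $u$ and $v$ is a set of $k$ internally disjoint paths that are either all $(u,v)$-paths or all $(v,u)$-paths, whose union contains every vertex of $D$. $D$ is $k^{*}$-weakly (resp. $k^{*}$-strongly) connected if there is a weak (resp. strong) $k^{*}$-container between every two distinct vertices of $D$. *)

theory Defs
  imports Main
begin

text \<open>A digraph is given by a finite vertex set V and an arc relation A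
  (A x y means that x dominates y, i.e. xy is an arc).\<close>

definition tournament :: "'a set \<Rightarrow> ('a \<Rightarrow> 'a \<Rightarrow> bool) \<Rightarrow> bool" where
  "tournament V A \<longleftrightarrow> finite V
     \<and> (\<forall>x y. A x y \<longrightarrow> x \<in> V \<and> y \<in> V)
     \<and> (\<forall>x. \<not> A x x)
     \<and> (\<forall>x\<in>V. \<forall>y\<in>V. x \<noteq> y \<longrightarrow> (A x y \<or> A y x))
     \<and> (\<forall>x y. A x y \<longrightarrow> \<not> A y x)"

definition strongly_connected :: "'a set \<Rightarrow> ('a \<Rightarrow> 'a \<Rightarrow> bool) \<Rightarrow> bool" where
  "strongly_connected V A \<longleftrightarrow> (\<forall>x\<in>V. \<forall>y\<in>V. A\<^sup>*\<^sup>* x y)"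

definition is_path :: "'a set \<Rightarrow> ('a \<Rightarrow> 'a \<Rightarrow> bool) \<Rightarrow> 'a list \<Rightarrow> bool" where
  "is_path V A p \<longleftrightarrow> p \<noteq> [] \<and> distinct p \<and> set p \<subseteq> V
     \<and> (\<forall>i. Suc i < length p \<longrightarrow> A (p ! i) (p ! Suc i))"

definition is_uv_path :: "'a set \<Rightarrow> ('a \<Rightarrow> 'a \<Rightarrow> bool) \<Rightarrow> 'a \<Rightarrow> 'a \<Rightarrow> 'a list \<Rightarrow> bool" where
  "is_uv_path V A u v p \<longleftrightarrow> is_path V A p \<and> hd p = u \<and> last p = v"

definition interior :: "'a list \<Rightarrow> 'a set" where
  "interior p = set (butlast (tl p))"

definition weak_container ::
  "'a set \<Rightarrow> ('a \<Rightarrow> 'a \<Rightarrow> bool) \<Rightarrow> nat \<Rightarrow> 'a \<Rightarrow> 'a \<Rightarrow> 'a list list \<Rightarrow> bool" where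
  "weak_container V A k u v Ps \<longleftrightarrow> length Ps = k \<and> distinct Ps
     \<and> (\<forall>p\<in>set Ps. is_uv_path V A u v p \<or> is_uv_path V A v u p)
     \<and> (\<forall>i<k. \<forall>j<k. i \<noteq> j \<longrightarrow> interior (Ps ! i) \<inter> interior (Ps ! j) = {})
     \<and> (\<Union>p\<in>set Ps. set p) = V"

definition k_star_weakly_connected :: "'a set \<Rightarrow> ('a \<Rightarrow> 'a \<Rightarrow> bool) \<Rightarrow> nat \<Rightarrow> bool" where
  "k_star_weakly_connected V A k \<longleftrightarrow>
     (\<forall>u\<in>V. \<forall>v\<in>V. u \<noteq> v \<longrightarrow> (\<exists>Ps. weak_container V A k u v Ps))"

end

theory Submission imports Defs begin

lemma succ_nth: "successively A p \<longleftrightarrow> (\<forall>i. Suc i < length p \<longrightarrow> A (p ! i) (p ! Suc i))"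
proof (induction A p rule: successively.induct)
  case (3 A x y xs)
  show ?case
  proof
    assume h: "successively A (x # y # xs)"
    show "\<forall>i. Suc i < length (x # y # xs) \<longrightarrow> A ((x # y # xs) ! i) ((x # y # xs) ! Suc i)"
    proof (intro allI impI)
      fix i assume "Suc i < length (x # y # xs)"
      then show "A ((x # y # xs) ! i) ((x # y # xs) ! Suc i)"
        using h 3 by (cases i) auto
    qed
  next
    assume h: "\<forall>i. Suc i < length (x # y # xs) \<longrightarrow> A ((x # y # xs) ! i) ((x # y # xs) ! Suc i)"
    have "A x y" using h[rule_format, of 0] by simp
    moreover have "\<forall>i. Suc i < length (y # xs) \<longrightarrow> A ((y # xs) ! i) ((y # xs) ! Suc i)"
      using h[rule_format, of "Suc _"] by auto
    ultimately show "successively A (x # y # xs)" using 3 by simp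
  qed
qed auto

lemma reach_closed:
  assumes "A\<^sup>*\<^sup>* a b" "a \<in> S" "\<forall>s w. s \<in> S \<longrightarrow> A s w \<longrightarrow> w \<in> S"
  shows "b \<in> S"
  using assms by (induction rule: rtranclp_induct) auto

lemma path_exists:
  assumes "A\<^sup>*\<^sup>* x y"
  shows "\<exists>p. p \<noteq> [] \<and> distinct p \<and> successively A p \<and> hd p = x \<and> last p = y
           \<and> set p \<subseteq> insert x {w. \<exists>s. A s w}"
  using assms
proof (induction rule: converse_rtranclp_induct)
  case base
  then show ?case by (intro exI[of _ "[y]"]) auto
next
  case (step x z)
  then obtain p where p: "p \<noteq> []" "distinct p" "successively A p" "hd p = z" "last p = y"
    "set p \<subseteq> insert z {w. \<exists>s. A s w}" by blast
  show ?case
  proof (cases "x \<in> set p")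
    case True
    then obtain as bs where ab: "p = as @ x # bs" by (meson split_list)
    have "successively A (x # bs)" using p(3) ab by (simp add: successively_append_iff)
    moreover have "last (x # bs) = y" using p(5) ab by simp
    moreover have "distinct (x # bs)" using p(2) ab by simp
    moreover have "set (x # bs) \<subseteq> insert x {w. \<exists>s. A s w}" using p(6) ab step(1) by auto
    ultimately show ?thesis by (intro exI[of _ "x # bs"]) auto
  next
    case False
    have "successively A (x # p)" using p step(1) by (simp add: successively_Cons)
    then show ?thesis using p False step(1) by (intro exI[of _ "x # p"]) auto
  qed
qed


definition cyc :: "'a set \<Rightarrow> ('a \<Rightarrow> 'a \<Rightarrow> bool) \<Rightarrow> 'a list \<Rightarrow> bool" where
  "cyc V A c \<longleftrightarrow> distinct c \<and> set c \<subseteq> V \<and> 2 \<le> length c \<and> successively A c \<and> A (last c) (hd c)"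

lemma cyc_rot:
  assumes "cyc V A (xs @ ys)" "ys \<noteq> []"
  shows "cyc V A (ys @ xs)"
proof (cases "xs = []")
  case True then show ?thesis using assms by simp
next
  case False
  have s: "successively A xs" "successively A ys" "A (last xs) (hd ys)"
    "A (last ys) (hd xs)"
    using assms False unfolding cyc_def by (auto simp: successively_append_iff)
  then have "successively A (ys @ xs)" using False assms(2) by (simp add: successively_append_iff)
  then show ?thesis using assms s False unfolding cyc_def by auto
qed

lemma insert_lemma:
  "successively A (y#xs) \<Longrightarrow> A y x \<Longrightarrow> z \<in> set xs \<Longrightarrow> A x z \<Longrightarrow> (\<forall>w\<in>set xs. A w x \<or> A x w)
   \<Longrightarrow> \<exists>ys. successively A ys \<and> hd ys = y \<and> last ys = last (y#xs) \<and> set ys = insert x (set (y#xs))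
        \<and> length ys = Suc (length (y#xs))"
proof (induction xs arbitrary: y)
  case Nil then show ?case by simp
next
  case (Cons w ws)
  show ?case
  proof (cases "A x w")
    case True
    have "successively A (y#x#w#ws)" using Cons.prems True by simp
    then show ?thesis by (intro exI[of _ "y#x#w#ws"]) auto
  next
    case False
    then have "A w x" using Cons.prems by auto
    have "z \<noteq> w" using False Cons.prems by auto
    then have "z \<in> set ws" using Cons.prems by auto
    have "successively A (w#ws)" using Cons.prems by simp
    from Cons.IH[OF this \<open>A w x\<close> \<open>z \<in> set ws\<close>] Cons.prems obtain ys where
      ys: "successively A ys" "hd ys = w" "last ys = last (w#ws)" "set ys = insert x (set (w#ws))"
        "length ys = Suc (length (w#ws))" by auto
    have "ys \<noteq> []" using ys(5) by auto
    then have "successively A (y#ys)" using ys Cons.prems by (simp add: successively_Cons)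
    then show ?thesis using ys \<open>ys \<noteq> []\<close> by (intro exI[of _ "y#ys"]) auto
  qed
qed

lemma extend:
  assumes T: "tournament V A" and S: "strongly_connected V A" and c: "cyc V A c" and ne: "set c \<noteq> V"
  shows "\<exists>c'. cyc V A c' \<and> length c < length c'"
proof -
  have fin: "finite V" and dom: "\<And>x y. A x y \<Longrightarrow> x \<in> V \<and> y \<in> V" and irr: "\<And>x. \<not> A x x"
    and tot: "\<And>x y. x \<in> V \<Longrightarrow> y \<in> V \<Longrightarrow> x \<noteq> y \<Longrightarrow> A x y \<or> A y x"
    and asy: "\<And>x y. A x y \<Longrightarrow> \<not> A y x" using T unfolding tournament_def by blast+
  have cV: "set c \<subseteq> V" and dc: "distinct c" and lc: "2 \<le> length c" using c unfolding cyc_def by auto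
  show ?thesis
  proof (cases "\<exists>x\<in>V - set c. (\<exists>y\<in>set c. A y x) \<and> (\<exists>z\<in>set c. A x z)")
    case True
    then obtain x y z where x: "x \<in> V" "x \<notin> set c" and y: "y \<in> set c" "A y x"
      and z: "z \<in> set c" "A x z" by blast
    obtain as bs where ab: "c = as @ y # bs" using y(1) by (meson split_list)
    have c2: "cyc V A (y # bs @ as)" using cyc_rot[of V A as "y # bs"] c ab by simp
    have "z \<noteq> y" using y z asy by blast
    then have zin: "z \<in> set (bs @ as)" using z ab by auto
    have "\<forall>w\<in>set (bs @ as). A w x \<or> A x w" using tot x cV ab by auto
    moreover have "successively A (y # bs @ as)" using c2 unfolding cyc_def by simp
    ultimately obtain ys where ys: "successively A ys" "hd ys = y" "last ys = last (y # bs @ as)"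
      "set ys = insert x (set (y # bs @ as))" "length ys = Suc (length (y # bs @ as))"
      using insert_lemma[of A y "bs @ as" x z] y(2) zin z(2) by blast
    have "distinct (y # bs @ as)" using c2 unfolding cyc_def by simp
    then have cd: "card (set (y # bs @ as)) = length (y # bs @ as)" by (rule distinct_card)
    have "x \<notin> set (y # bs @ as)" using x(2) ab by auto
    then have "card (set ys) = length ys" using ys(4,5) cd by simp
    then have "distinct ys" by (simp add: card_distinct)
    moreover have "set ys \<subseteq> V" using ys(4) x cV ab by auto
    moreover have "A (last ys) (hd ys)" using c2 ys(2,3) unfolding cyc_def by simp
    ultimately have "cyc V A ys" using ys(1,5) unfolding cyc_def by auto
    then show ?thesis using ys(5) ab by (intro exI[of _ ys]) auto
  next
    case False
    define D where "D = {x \<in> V - set c. \<forall>y\<in>set c. A x y}"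
    define E where "E = {x \<in> V - set c. \<forall>y\<in>set c. A y x}"
    have DE: "x \<in> D \<or> x \<in> E" if "x \<in> V - set c" for x
    proof -
      have "\<not> ((\<exists>y\<in>set c. A y x) \<and> (\<exists>z\<in>set c. A x z))" using False that by blast
      then show ?thesis unfolding D_def E_def using that tot cV by blast
    qed
    obtain c1 c2 rest where cr: "c = c1 # c2 # rest"
      using lc by (metis Suc_le_length_iff numeral_2_eq_2)
    have "rest \<noteq> []"
    proof
      assume "rest = []"
      then have "A c1 c2" "A c2 c1" using c cr unfolding cyc_def by auto
      then show False using asy by blast
    qed
    have c1in: "c1 \<in> set c" using cr by simp
    have "\<exists>e\<in>E. \<exists>d\<in>D. A e d"
    proof (rule ccontr)
      assume nED: "\<not> ?thesis"
      obtain x where x: "x \<in> V" "x \<notin> set c" using ne cV by blast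
      have "x \<in> D \<or> x \<in> E" using DE x by blast
      then show False
      proof
        assume xD: "x \<in> D"
        have cl: "\<forall>s w. s \<in> set c \<union> E \<longrightarrow> A s w \<longrightarrow> w \<in> set c \<union> E"
        proof (intro allI impI)
          fix s w assume s: "s \<in> set c \<union> E" and a: "A s w"
          show "w \<in> set c \<union> E"
          proof (rule ccontr)
            assume "w \<notin> set c \<union> E"
            then have "w \<in> D" using DE dom[OF a] by blast
            then show False using s a nED asy unfolding D_def by blast
          qed
        qed
        have "A\<^sup>*\<^sup>* c1 x" using S c1in cV x unfolding strongly_connected_def by blast
        from reach_closed[OF this _ cl] c1in have "x \<in> set c \<union> E" by blast
        then show False using xD x c1in asy unfolding D_def E_def by blast
      next
        assume xE: "x \<in> E"
        have cl: "\<forall>s w. s \<in> E \<longrightarrow> A s w \<longrightarrow> w \<in> E"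
        proof (intro allI impI)
          fix s w assume s: "s \<in> E" and a: "A s w"
          show "w \<in> E"
          proof (rule ccontr)
            assume "w \<notin> E"
            moreover have "w \<notin> set c" using s a asy unfolding E_def by blast
            ultimately have "w \<in> D" using DE dom[OF a] by blast
            then show False using s a nED by blast
          qed
        qed
        have "A\<^sup>*\<^sup>* x c1" using S c1in cV x unfolding strongly_connected_def by blast
        from reach_closed[OF this xE cl] c1in show False unfolding E_def by blast
      qed
    qed
    then obtain e d where e: "e \<in> E" and d: "d \<in> D" and ed: "A e d" by blast
    define c' where "c' = c1 # e # d # rest"
    have "successively A rest" using c cr \<open>rest \<noteq> []\<close> unfolding cyc_def by (simp add: successively_Cons)
    moreover have "A c1 e" using e cr unfolding E_def by simp
    moreover have "A d (hd rest)" using d cr \<open>rest \<noteq> []\<close> unfolding D_def by (cases rest) auto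
    ultimately have sc: "successively A c'" unfolding c'_def using ed \<open>rest \<noteq> []\<close>
      by (simp add: successively_Cons)
    have "A (last c') (hd c')" using c cr \<open>rest \<noteq> []\<close> unfolding cyc_def c'_def by simp
    moreover have "e \<noteq> d" using ed irr by blast
    moreover have "distinct c'" using dc cr e d \<open>e \<noteq> d\<close> unfolding c'_def D_def E_def by auto
    moreover have "set c' \<subseteq> V" using cV cr e d unfolding c'_def D_def E_def by auto
    ultimately have "cyc V A c'" using sc unfolding cyc_def c'_def by auto
    then show ?thesis using cr c'_def by (intro exI[of _ c']) auto
  qed
qed


lemma grow:
  assumes T: "tournament V A" and S: "strongly_connected V A" and c: "cyc V A c"
  shows "\<exists>h. cyc V A h \<and> set h = V"
  using c
proof (induction "card V - length c" arbitrary: c rule: less_induct)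
  case less
  show ?case
  proof (cases "set c = V")
    case True then show ?thesis using less.prems by blast
  next
    case False
    obtain c' where c': "cyc V A c'" "length c < length c'" using extend[OF T S less.prems False] by blast
    have fin: "finite V" using T unfolding tournament_def by blast
    have "length c' = card (set c')" using c' unfolding cyc_def by (simp add: distinct_card)
    also have "\<dots> \<le> card V" using c' fin unfolding cyc_def by (simp add: card_mono)
    finally have "card V - length c' < card V - length c" using c'(2) by linarith
    then show ?thesis using less.hyps c'(1) by blast
  qed
qed

lemma ham:
  assumes T: "tournament V A" and S: "strongly_connected V A" and u: "u \<in> V" "v \<in> V" "u \<noteq> v"
  shows "\<exists>h. cyc V A h \<and> set h = V"
proof -
  have dom: "\<And>x y. A x y \<Longrightarrow> x \<in> V \<and> y \<in> V"
    and tot: "\<And>x y. x \<in> V \<Longrightarrow> y \<in> V \<Longrightarrow> x \<noteq> y \<Longrightarrow> A x y \<or> A y x"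
    using T unfolding tournament_def by blast+
  obtain a b where ab: "A a b" "a \<in> V" "b \<in> V" "a \<noteq> b" using tot[OF u] u by blast
  have "A\<^sup>*\<^sup>* b a" using S ab unfolding strongly_connected_def by blast
  then obtain p where p: "p \<noteq> []" "distinct p" "successively A p" "hd p = b" "last p = a"
    "set p \<subseteq> insert b {w. \<exists>s. A s w}" using path_exists by metis
  have "set p \<subseteq> V" using p(6) ab dom by blast
  moreover have "2 \<le> length p"
  proof (rule ccontr)
    assume "\<not> 2 \<le> length p"
    moreover have "length p \<noteq> 0" using p(1) by simp
    ultimately have "length p = 1" by linarith
    then obtain x where "p = [x]" by (metis One_nat_def length_0_conv length_Suc_conv)
    then show False using p(4,5) ab by simp
  qed
  ultimately have "cyc V A p" using p ab unfolding cyc_def by simp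
  then show ?thesis using grow[OF T S] by blast
qed

theorem proposition2p6:
  fixes V :: "'a set" and A :: "'a \<Rightarrow> 'a \<Rightarrow> bool"
  assumes "tournament V A" and "strongly_connected V A"
  shows "k_star_weakly_connected V A 2"
  unfolding k_star_weakly_connected_def
proof (intro ballI impI)
  fix u v assume uv: "u \<in> V" "v \<in> V" "u \<noteq> v"
  obtain h where h: "cyc V A h" "set h = V" using ham[OF assms uv] by blast
  obtain xs ys where "h = xs @ u # ys" using h(2) uv(1) by (metis split_list)
  then have r: "cyc V A (u # ys @ xs)" using cyc_rot[of V A xs "u # ys"] h(1) by simp
  have sr: "set (u # ys @ xs) = V" using h(2) \<open>h = _\<close> by auto
  then have "v \<in> set (ys @ xs)" using uv by auto
  then obtain p q where pq: "ys @ xs = p @ v # q" by (metis split_list)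
  have c: "cyc V A (u # p @ v # q)" using r pq by simp
  have sV: "set (u # p @ v # q) = V" using sr pq by simp
  have dst: "distinct (u # p @ v # q)" and sc: "successively A (u # p @ v # q)"
    and cl: "A (last (u # p @ v # q)) u" using c unfolding cyc_def by auto
  define P1 where "P1 = u # p @ [v]"
  define P2 where "P2 = v # q @ [u]"
  have s1: "successively A P1" using sc successively_append_iff[of A "u # p @ [v]" q] unfolding P1_def
    by simp
  have "successively A (v # q)" using sc by (simp add: successively_append_iff successively_Cons)
  moreover have "A (last (v # q)) u" using cl by simp
  ultimately have s2: "successively A P2" unfolding P2_def
    using successively_append_iff[of A "v # q" "[u]"] by simp
  have p1: "is_uv_path V A u v P1" unfolding is_uv_path_def is_path_def P1_def
    using s1 dst sV succ_nth[of A "u # p @ [v]"] P1_def by auto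
  have p2: "is_uv_path V A v u P2" unfolding is_uv_path_def is_path_def P2_def
    using s2 dst sV succ_nth[of A "v # q @ [u]"] P2_def by auto
  have i1: "interior P1 = set p" unfolding interior_def P1_def by (simp add: butlast_append)
  have i2: "interior P2 = set q" unfolding interior_def P2_def by (simp add: butlast_append)
  have "weak_container V A 2 u v [P1, P2]"
    unfolding weak_container_def
  proof (intro conjI)
    show "distinct [P1, P2]" using uv(3) unfolding P1_def P2_def by auto
    show "\<forall>p\<in>set [P1, P2]. is_uv_path V A u v p \<or> is_uv_path V A v u p" using p1 p2 by auto
    show "\<forall>i<2. \<forall>j<2. i \<noteq> j \<longrightarrow> interior ([P1, P2] ! i) \<inter> interior ([P1, P2] ! j) = {}"
    proof (intro allI impI)
      fix i j :: nat assume "i < 2" "j < 2" "i \<noteq> j"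
      then have "(i = 0 \<and> j = 1) \<or> (i = 1 \<and> j = 0)" by auto
      then show "interior ([P1, P2] ! i) \<inter> interior ([P1, P2] ! j) = {}"
        using i1 i2 dst by auto
    qed
    show "(\<Union>p\<in>set [P1, P2]. set p) = V" using sV unfolding P1_def P2_def by auto
  qed simp
  then show "\<exists>Ps. weak_container V A 2 u v Ps" by blast
qed

end
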